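(* Let $F$ be a positive integer, $S\in\mathrm{Sat}(F)$, and $s\in S$ with $0<s<F$ such that $\mathrm{d}_S(s)\neq\mathrm{d}_S(s')$ for all $s'\in S$ with $0<s'<s$. If $X$ is a $\mathrm{Sat}(F)$-set with $\mathrm{Sat}(F)[X]=S$, then $s\in X$.
   Context: A numerical semigroup is a subset $S\subseteq\mathbb{N}$ closed under addition, containing $0$, with $\mathbb{N}\setminus S$ finite; its Frobenius number $\mathrm{F}(S)$ is the largest integer not in $S$. For $A\subseteq\mathbb{N}$ and $a\in A$, let $\mathrm{d}_A(a)=\gcd\{x\in A\mid x\le a\}$. A numerical semigroup $S$ is saturated if $s+\mathrm{d}_S(s)\in S$ for all $s\in S\setminus\{0\}$. For a positive integer $F$, $\mathrm{Sat}(F)$ denotes the set of all saturated numerical semigroups $S$ with $\mathrm{F}(S)=F$. Let $\Delta(F+1)=\{0\}\cup\{x\in\mathbb{N}\mid x\ge F+1\}$. A set $X\subseteq\mathbb{N}$ is a $\mathrm{Sat}(F)$-set if $X\cap\Delta(F+1)=\emptyset$ and there exists $S\in\mathrm{Sat}(F)$ with $X\subseteq S$. For a $\mathrm{Sat}(F)$-set $X$, $\mathrm{Sat}(F)[X]$ denotes the intersection of all elements of $\mathrm{Sat}(F)$ containing $X$ (it is the smallest element of $\mathrm{Sat}(F)$ containing $X$). *)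

theory Defs
  imports Main
begin

definition numerical_semigroup :: "nat set \<Rightarrow> bool" where
  "numerical_semigroup S \<longleftrightarrow> 0 \<in> S \<and> (\<forall>x\<in>S. \<forall>y\<in>S. x + y \<in> S) \<and> finite (UNIV - S)"

definition frobenius :: "nat set \<Rightarrow> nat" where
  "frobenius S = Max (UNIV - S)"

definition dgcd :: "nat set \<Rightarrow> nat \<Rightarrow> nat" where
  "dgcd A a = Gcd {x \<in> A. x \<le> a}"

definition saturated :: "nat set \<Rightarrow> bool" where
  "saturated S \<longleftrightarrow> numerical_semigroup S \<and> (\<forall>s\<in>S - {0}. s + dgcd S s \<in> S)"

definition Sat :: "nat \<Rightarrow> nat set set" where
  "Sat F = {S. saturated S \<and> UNIV - S \<noteq> {} \<and> frobenius S = F}"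

definition Delta :: "nat \<Rightarrow> nat set" where
  "Delta m = {0} \<union> {x. x \<ge> m}"

definition Sat_set :: "nat \<Rightarrow> nat set \<Rightarrow> bool" where
  "Sat_set F X \<longleftrightarrow> X \<inter> Delta (F + 1) = {} \<and> (\<exists>S\<in>Sat F. X \<subseteq> S)"

definition Sat_closure :: "nat \<Rightarrow> nat set \<Rightarrow> nat set" where
  "Sat_closure F X = \<Inter> {S \<in> Sat F. X \<subseteq> S}"

end

theory Submission
  imports Defs
begin

lemma dgcd_dvd: "x \<in> S \<Longrightarrow> x \<le> a \<Longrightarrow> dgcd S a dvd x"
  unfolding dgcd_def by (rule Gcd_dvd) simp

lemma dgcd_mono: "a \<le> b \<Longrightarrow> dgcd S b dvd dgcd S a"
  unfolding dgcd_def by (rule Gcd_greatest) (auto intro: Gcd_dvd)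

lemma satA:
  assumes sat: "saturated S" and t: "t \<in> S" "0 < t" and dv: "dgcd S t dvd m"
  shows "t + m \<in> S"
proof (rule ccontr)
  assume nin: "t + m \<notin> S"
  define U where "U = {u \<in> S. u \<le> t + m}"
  have fin: "finite U" unfolding U_def by simp
  have tU: "t \<in> U" using t unfolding U_def by simp
  define u where "u = Max U"
  have uU: "u \<in> U" using fin tU unfolding u_def by (intro Max_in) auto
  have tu: "t \<le> u" using fin tU unfolding u_def by simp
  have uS: "u \<in> S" and ule: "u \<le> t + m" using uU unfolding U_def by auto
  hence ult: "u < t + m" using nin by (cases "u = t+m") auto
  have "u + dgcd S u \<in> S" using sat uS tu t unfolding saturated_def by auto
  moreover have "\<not> (u + dgcd S u \<le> t + m)"
  proof
    assume "u + dgcd S u \<le> t + m"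
    with \<open>u + dgcd S u \<in> S\<close> have "u + dgcd S u \<in> U" unfolding U_def by simp
    hence "u + dgcd S u \<le> Max U" by (rule Max_ge[OF fin])
    hence "u + dgcd S u \<le> u" unfolding u_def .
    hence "dgcd S u = 0" by simp
    hence "u = 0" using dgcd_dvd[OF uS, of u] by simp
    thus False using tu t by simp
  qed
  moreover have d1: "dgcd S u dvd t" using dgcd_dvd[OF t(1) tu] .
  have d2: "dgcd S u dvd u" using dgcd_dvd[OF uS, of u] by simp
  have d3: "dgcd S u dvd m" using dgcd_mono[OF tu, of S] dv by (rule dvd_trans)
  have "dgcd S u dvd (t + m - u)" using d1 d2 d3 by (simp add: dvd_diff_nat)
  hence "dgcd S u \<le> t + m - u" using ult by (intro dvd_imp_le) auto
  ultimately show False using ult by simp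
qed

theorem lemma38:
  fixes F s :: nat and S X :: "nat set"
  assumes "F > 0"
    and "S \<in> Sat F"
    and "s \<in> S" and "0 < s" and "s < F"
    and "\<forall>s'\<in>S. 0 < s' \<and> s' < s \<longrightarrow> dgcd S s \<noteq> dgcd S s'"
    and "Sat_set F X"
    and "Sat_closure F X = S"
  shows "s \<in> X"
proof (rule ccontr)
  assume sX: "s \<notin> X"
  have sat: "saturated S" and nonfull: "UNIV - S \<noteq> {}" and frob: "frobenius S = F"
    using assms(2) unfolding Sat_def by auto
  have ns: "numerical_semigroup S" using sat unfolding saturated_def by simp
  have S0: "0 \<in> S" and Sadd: "\<And>x y. x \<in> S \<Longrightarrow> y \<in> S \<Longrightarrow> x + y \<in> S"
    and Sfin: "finite (UNIV - S)" using ns unfolding numerical_semigroup_def by auto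
  have XS: "X \<subseteq> S"
    using assms(8) unfolding Sat_closure_def by auto
  define T where "T = S - {s}"
  define u where "u = Max {x \<in> S. x < s}"
  have finL: "finite {x \<in> S. x < s}" by simp
  have "0 \<in> {x \<in> S. x < s}" using S0 assms(4) by simp
  hence "u \<in> {x \<in> S. x < s}" using finL unfolding u_def by (intro Max_in) auto
  hence uin: "u \<in> S" "u < s" by auto
  have umax: "\<And>x. x \<in> S \<Longrightarrow> x < s \<Longrightarrow> x \<le> u" using finL unfolding u_def by simp
  have C: False if "x \<in> S" "0 < x" "x < s" "dgcd S u dvd s" for x
  proof -
    have "x \<le> u" using umax that by simp
    hence upos: "0 < u" using that by simp
    have "{y \<in> S. y \<le> s} = insert s {y \<in> S. y \<le> u}"
    proof (intro set_eqI iffI)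
      fix y assume "y \<in> {y \<in> S. y \<le> s}"
      thus "y \<in> insert s {y \<in> S. y \<le> u}" using umax[of y] by (cases "y = s") auto
    next
      fix y assume "y \<in> insert s {y \<in> S. y \<le> u}"
      thus "y \<in> {y \<in> S. y \<le> s}" using assms(3) uin by auto
    qed
    hence "dgcd S s = gcd s (dgcd S u)" unfolding dgcd_def by simp
    also have "\<dots> = dgcd S u" using that(4) by (simp add: gcd_nat.absorb2)
    finally show False using assms(6) uin upos by auto
  qed
  have Tns: "numerical_semigroup T"
    unfolding numerical_semigroup_def
  proof (intro conjI ballI)
    show "0 \<in> T" using S0 assms(4) unfolding T_def by simp
    show "finite (UNIV - T)"
      proof -
      have "UNIV - (S - {s}) = insert s (UNIV - S)" by auto
      thus ?thesis using Sfin unfolding T_def by simp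
    qed
  next
    fix x y assume xy: "x \<in> T" "y \<in> T"
    have "x + y \<in> S" using xy Sadd unfolding T_def by auto
    moreover have "x + y \<noteq> s"
    proof
      assume e: "x + y = s"
      have "x \<noteq> 0" "y \<noteq> 0" using xy e unfolding T_def by auto
      hence "x < s" "y < s" using e by auto
      hence "dgcd S u dvd x" "dgcd S u dvd y"
        using xy umax dgcd_dvd unfolding T_def by auto
      hence "dgcd S u dvd s" using e by auto
      thus False using C xy \<open>x < s\<close> \<open>x \<noteq> 0\<close> unfolding T_def by auto
    qed
    ultimately show "x + y \<in> T" unfolding T_def by simp
  qed
  have Tsat: "saturated T"
    unfolding saturated_def
  proof (intro conjI ballI Tns)
    fix t assume tT: "t \<in> T - {0}"
    hence tS: "t \<in> S" and tpos: "0 < t" and tns: "t \<noteq> s" unfolding T_def by auto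
    show "t + dgcd T t \<in> T"
    proof (cases "t < s")
      case True
      have "{x \<in> T. x \<le> t} = {x \<in> S. x \<le> t}" using True unfolding T_def by auto
      hence eq: "dgcd T t = dgcd S t" unfolding dgcd_def by simp
      have in1: "t + dgcd S t \<in> S" using sat tS tpos unfolding saturated_def by auto
      have "t + dgcd S t \<noteq> s"
      proof
        assume e: "t + dgcd S t = s"
        have tu: "t \<le> u" using umax tS True by simp
        have "dgcd S u dvd t" using dgcd_dvd[OF tS tu] .
        moreover have "dgcd S u dvd dgcd S t" using dgcd_mono[OF tu] .
        ultimately have "dgcd S u dvd s" using e dvd_add by metis
        thus False using C[OF tS tpos True] by simp
      qed
      thus ?thesis using in1 eq unfolding T_def by simp
    next
      case False
      hence gt: "s < t" using tns by simp
      have "dgcd S t dvd dgcd T t"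
        unfolding dgcd_def[of T] by (rule Gcd_greatest) (auto simp: T_def intro: dgcd_dvd)
      hence "t + dgcd T t \<in> S" using satA[OF sat tS tpos] by simp
      thus ?thesis using gt unfolding T_def by simp
    qed
  qed
  have comp: "UNIV - T = insert s (UNIV - S)" using assms(3) unfolding T_def by auto
  have "frobenius T = max s (Max (UNIV - S))"
    unfolding frobenius_def comp using Sfin nonfull by simp
  hence fT: "frobenius T = F" using frob assms(5) unfolding frobenius_def by simp
  have TSat: "T \<in> Sat F" unfolding Sat_def using Tsat fT comp by auto
  have "X \<subseteq> T" using XS sX unfolding T_def by auto
  hence "S \<subseteq> T" using TSat assms(8) unfolding Sat_closure_def by auto
  thus False using assms(3) unfolding T_def by auto
qed

end
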